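(* Let $m,n$ be positive integers and for each $1\le i\le 2m$ let $\mathbf{x}^{(i)}=(\mathbf{x}^{(i)}_1,\dots,\mathbf{x}^{(i)}_n)$ be complex numbers in the open unit disc (or formal variables, the identity holding as formal power series). Then $$\sum_{\lambda:\ \ell(\lambda)\le n}s_\lambda(\mathbf{x}^{(1)})\cdots s_\lambda(\mathbf{x}^{(2m)})=\prod_{i=1}^{2m}\frac{1}{V(\mathbf{x}^{(i)})}\cdot\mathrm{Det}^{[2m]}\left(\frac{1}{1-\mathbf{x}^{(1)}_{i_1}\cdots\mathbf{x}^{(2m)}_{i_{2m}}}\right)_{1\le i_1,\dots,i_{2m}\le n}.$$
   Context: $V(\mathbf{x})=\prod_{1\le i<j\le n}(\mathbf{x}_i-\mathbf{x}_j)$; $s_\lambda(\mathbf{x})=\det(\mathbf{x}_i^{\lambda_j+n-j})_{1\le i,j\le n}/V(\mathbf{x})$ is the Schur polynomial in $n$ variables, the sum being over all partitions with at most $n$ parts. Hyperdeterminant: $\mathrm{Det}^{[2m]}(A):=\frac{1}{n!}\sum_{\sigma_1,\dots,\sigma_{2m}\in\mathfrak{S}_n}\mathrm{sgn}(\sigma_1)\cdots\mathrm{sgn}(\sigma_{2m})\prod_{i=1}^nA(\sigma_1(i),\dots,\sigma_{2m}(i))$. *)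

theory Defs
  imports "HOL-Analysis.Analysis" "Jordan_Normal_Form.Determinant"
begin

definition partitions_le :: "nat \<Rightarrow> (nat \<Rightarrow> nat) set" where
  "partitions_le n = {lam. (\<forall>i j. i \<le> j \<longrightarrow> lam j \<le> lam i) \<and> (\<forall>j\<ge>n. lam j = 0)}"

definition vandermonde :: "nat \<Rightarrow> (nat \<Rightarrow> complex) \<Rightarrow> complex" where
  "vandermonde n y = (\<Prod>j<n. \<Prod>i<j. (y i - y j))"

definition schur :: "nat \<Rightarrow> (nat \<Rightarrow> complex) \<Rightarrow> (nat \<Rightarrow> nat) \<Rightarrow> complex" where
  "schur n y lam =
     Determinant.det (mat n n (\<lambda>(i, j). y i ^ (lam j + (n - 1 - j)))) / vandermonde n y"

text \<open>Hyperdeterminant of order r of an n x ... x n array A, where A is applied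
  to an index tuple given as a function k \<mapsto> i_k (k < r).\<close>
definition hyperdet :: "nat \<Rightarrow> nat \<Rightarrow> ((nat \<Rightarrow> nat) \<Rightarrow> complex) \<Rightarrow> complex" where
  "hyperdet r n A = (1 / of_nat (fact n)) *
     (\<Sum>\<sigma> \<in> Pi\<^sub>E {..<r} (\<lambda>_. {p. p permutes {..<n}}).
        (\<Prod>k<r. of_int (sign (\<sigma> k))) * (\<Prod>i<n. A (\<lambda>k. \<sigma> k i)))"

end

theory Submission
  imports Defs
begin

lemma has_sum_sum_fin:
  fixes f :: "'i \<Rightarrow> 'a \<Rightarrow> complex"
  assumes "finite I" "\<And>i. i \<in> I \<Longrightarrow> (f i has_sum s i) A"
  shows "((\<lambda>x. \<Sum>i\<in>I. f i x) has_sum (\<Sum>i\<in>I. s i)) A"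
  using assms
proof (induction I rule: finite_induct)
  case empty then show ?case by simp
next
  case (insert i I)
  then show ?case by (simp add: has_sum_add)
qed

lemma geo_has_sum:
  fixes z :: "'a::{real_normed_field,banach}" assumes "norm z < 1"
  shows "((\<lambda>t. z ^ t) has_sum (1 / (1 - z))) UNIV"
proof -
  have "(\<lambda>t. z ^ t) sums (1 / (1 - z))" using geometric_sums[OF assms] by simp
  moreover have "summable (\<lambda>t. norm (z ^ t))"
    using assms by (auto simp: norm_power intro!: summable_geometric)
  ultimately show ?thesis by (intro norm_summable_imp_has_sum)
qed

lemma geo_abs_summable:
  fixes z :: "'a::{real_normed_field,banach}" assumes "norm z < 1"
  shows "Infinite_Sum.abs_summable_on (\<lambda>t. z ^ t) UNIV"
proof -
  have "summable (\<lambda>t. norm (z ^ t))"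
    using assms by (auto simp: norm_power intro!: summable_geometric)
  then have "((\<lambda>t. norm (z ^ t)) has_sum (suminf (\<lambda>t. norm (z ^ t)))) UNIV"
    by (intro norm_summable_imp_has_sum) (auto simp: summable_sums)
  then show ?thesis by (auto simp: summable_on_def)
qed

lemma geo_PiE:
  fixes z :: "nat \<Rightarrow> complex"
  assumes fin: "finite A" and lt: "\<And>j. j \<in> A \<Longrightarrow> norm (z j) < 1"
  shows "((\<lambda>\<mu>. \<Prod>j\<in>A. z j ^ \<mu> j) has_sum (\<Prod>j\<in>A. 1 / (1 - z j))) (PiE A (\<lambda>_. UNIV))"
proof -
  define g where "g = (\<lambda>\<mu>::nat\<Rightarrow>nat. \<Prod>j\<in>A. (norm (z j)) ^ \<mu> j)"
  have ng: "norm (norm (z j)) < 1" if "j \<in> A" for j using lt[OF that] by simp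
  have "infsum g (PiE A (\<lambda>_. UNIV)) = (\<Prod>j\<in>A. infsum (\<lambda>t. (norm (z j)) ^ t) UNIV)"
    unfolding g_def by (rule infsum_prod_PiE_abs[OF fin]) (use ng geo_abs_summable in blast)
  also have "\<dots> = (\<Prod>j\<in>A. 1 / (1 - (norm (z j))))"
    by (intro prod.cong refl infsumI geo_has_sum ng)
  also have "\<dots> \<noteq> 0"
    using fin lt by (force simp: prod_zero_iff)
  finally have "g summable_on (PiE A (\<lambda>_. UNIV))" using infsum_not_exists by blast
  moreover have "g = (\<lambda>\<mu>. norm (\<Prod>j\<in>A. z j ^ \<mu> j))"
    by (simp add: g_def prod_norm[symmetric] norm_power)
  ultimately have "(\<lambda>\<mu>. norm (\<Prod>j\<in>A. z j ^ \<mu> j)) summable_on (PiE A (\<lambda>_. UNIV))"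
    by metis
  then have sm: "(\<lambda>\<mu>. \<Prod>j\<in>A. z j ^ \<mu> j) summable_on (PiE A (\<lambda>_. UNIV))"
    by (rule abs_summable_summable)
  have "infsum (\<lambda>\<mu>. \<Prod>j\<in>A. z j ^ \<mu> j) (PiE A (\<lambda>_. UNIV)) = (\<Prod>j\<in>A. infsum (\<lambda>t. z j ^ t) UNIV)"
    by (rule infsum_prod_PiE_abs[OF fin]) (use lt geo_abs_summable in blast)
  also have "\<dots> = (\<Prod>j\<in>A. 1 / (1 - z j))"
    by (intro prod.cong refl infsumI geo_has_sum lt)
  finally show ?thesis using sm by (metis has_sum_infsum)
qed

definition Dk :: "nat \<Rightarrow> (nat \<Rightarrow> complex) \<Rightarrow> (nat \<Rightarrow> nat) \<Rightarrow> complex" where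
  "Dk n y \<mu> = (\<Sum>p\<in>{p. p permutes {..<n}}. of_int (sign p) * (\<Prod>i<n. y (p i) ^ \<mu> i))"

lemma det_link:
  "Determinant.det (mat n n (\<lambda>(i, j). y i ^ e j)) = Dk n y e"
proof -
  let ?A = "mat n n (\<lambda>(i, j). y i ^ e j)"
  have A: "?A \<in> carrier_mat n n" by simp
  have "Determinant.det ?A = Determinant.det (transpose_mat ?A)"
    using det_transpose[OF A] by simp
  also have "\<dots> = (\<Sum>p\<in>{p. p permutes {0..<n}}. signof p * (\<Prod>i=0..<n. transpose_mat ?A $$ (i, p i)))"
    by (rule det_def') simp
  also have "\<dots> = Dk n y e"
    unfolding Dk_def atLeast0LessThan
  proof (intro sum.cong refl arg_cong2[where f="(*)"] prod.cong)
    fix p i assume p: "p \<in> {p. p permutes {..<n}}" and i: "i \<in> {..<n}"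
    then have "p i < n" using permutes_in_image[of p "{..<n}" i] by auto
    then show "transpose_mat ?A $$ (i, p i) = y (p i) ^ e i" using i by simp
  qed
  finally show ?thesis .
qed

lemma D_perm:
  assumes tau: "\<tau> permutes {..<n}"
  shows "Dk n y (\<mu> \<circ> \<tau>) = of_int (sign \<tau>) * Dk n y \<mu>"
proof -
  let ?P = "{p. p permutes {..<n}}"
  define H where "H q = (\<Prod>i<n. y (q i) ^ \<mu> i)" for q
  have pt: "permutation \<tau>" using tau permutes_imp_permutation by blast
  have 1: "(\<Prod>i<n. y (p i) ^ (\<mu> \<circ> \<tau>) i) = H (p \<circ> Hilbert_Choice.inv \<tau>)" if p: "p permutes {..<n}" for p
  proof -
    have "(\<Prod>i<n. y (p i) ^ (\<mu> \<circ> \<tau>) i) = (\<Prod>i<n. (\<lambda>j. y (p (Hilbert_Choice.inv \<tau> j)) ^ \<mu> j) (\<tau> i))"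
      using permutes_inverses(2)[OF tau] by simp
    also have "\<dots> = (\<Prod>j<n. y (p (Hilbert_Choice.inv \<tau> j)) ^ \<mu> j)"
      using prod.reindex_bij_betw[OF permutes_imp_bij[OF tau], of "\<lambda>j. y (p (Hilbert_Choice.inv \<tau> j)) ^ \<mu> j"]
      by simp
    finally show ?thesis by (simp add: H_def)
  qed
  have "Dk n y (\<mu> \<circ> \<tau>) = (\<Sum>p\<in>?P. of_int (sign p) * H (p \<circ> Hilbert_Choice.inv \<tau>))"
    unfolding Dk_def using 1 by (intro sum.cong) auto
  also have "\<dots> = (\<Sum>q\<in>?P. of_int (sign (q \<circ> \<tau>)) * H (q \<circ> \<tau> \<circ> Hilbert_Choice.inv \<tau>))"
  proof (rule sum.reindex_bij_witness[where i="\<lambda>q. q \<circ> \<tau>" and j="\<lambda>p. p \<circ> Hilbert_Choice.inv \<tau>"])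
    fix p assume "p \<in> ?P"
    show "p \<circ> Hilbert_Choice.inv \<tau> \<circ> \<tau> = p" by (simp add: comp_assoc permutes_inv_o(2)[OF tau])
    show "p \<circ> Hilbert_Choice.inv \<tau> \<in> ?P" using \<open>p \<in> ?P\<close> permutes_compose permutes_inv tau by blast
    show "of_int (sign (p \<circ> Hilbert_Choice.inv \<tau> \<circ> \<tau>)) * H (p \<circ> Hilbert_Choice.inv \<tau> \<circ> \<tau> \<circ> Hilbert_Choice.inv \<tau>) = of_int (sign p) * H (p \<circ> Hilbert_Choice.inv \<tau>)"
      by (simp add: comp_assoc permutes_inv_o(2)[OF tau])
  next
    fix q assume "q \<in> ?P"
    show "q \<circ> \<tau> \<circ> Hilbert_Choice.inv \<tau> = q" by (simp add: comp_assoc permutes_inv_o(1)[OF tau])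
    show "q \<circ> \<tau> \<in> ?P" using \<open>q \<in> ?P\<close> permutes_compose tau by blast
  qed
  also have "\<dots> = (\<Sum>q\<in>?P. of_int (sign \<tau>) * (of_int (sign q) * H q))"
  proof (intro sum.cong refl)
    fix q assume "q \<in> ?P"
    then have "permutation q" using permutes_imp_permutation by blast
    then show "of_int (sign (q \<circ> \<tau>)) * H (q \<circ> \<tau> \<circ> Hilbert_Choice.inv \<tau>) = of_int (sign \<tau>) * (of_int (sign q) * H q)"
      using pt by (simp add: sign_compose comp_assoc permutes_inv_o(1)[OF tau])
  qed
  also have "\<dots> = of_int (sign \<tau>) * Dk n y \<mu>"
    by (simp add: Dk_def H_def sum_distrib_left)
  finally show ?thesis .
qed

lemma D_zero:
  assumes "a < n" "b < n" "a \<noteq> b" "\<mu> a = \<mu> b"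
  shows "Dk n y \<mu> = 0"
proof -
  have t: "Transposition.transpose a b permutes {..<n}" using assms by (intro permutes_swap_id) auto
  have "\<mu> \<circ> Transposition.transpose a b = \<mu>" using assms(4) by (auto simp: fun_eq_iff Transposition.transpose_def)
  then have "Dk n y \<mu> = - Dk n y \<mu>" using D_perm[OF t, of y \<mu>] assms(3) by (simp add: sign_swap_id)
  then show ?thesis by simp
qed

lemma prod_norm_lt1:
  fixes a :: "nat \<Rightarrow> complex"
  assumes "r > 0" "\<And>k. k < r \<Longrightarrow> norm (a k) < 1"
  shows "norm (\<Prod>k<r. a k) < 1"
proof -
  obtain r' where r: "r = Suc r'" using assms(1) gr0_implies_Suc by blast
  have "norm (\<Prod>k<r. a k) = (\<Prod>k<r'. norm (a k)) * norm (a r')"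
    by (simp add: r prod_norm[symmetric] norm_mult)
  also have "\<dots> < 1"
  proof -
    have "(\<Prod>k<r'. norm (a k)) \<le> 1"
    proof (rule prod_le_1)
      fix k assume "k \<in> {..<r'}"
      then have "norm (a k) < 1" using assms(2) r by simp
      then show "0 \<le> norm (a k) \<and> norm (a k) \<le> 1" by simp
    qed
    moreover have "norm (a r') < 1" using assms(2) r by simp
    ultimately show ?thesis
      by (metis mult_left_le_one_le mult.commute norm_ge_zero order.strict_trans1 prod_nonneg)
  qed
  finally show ?thesis .
qed

lemma T_sum:
  fixes x :: "nat \<Rightarrow> nat \<Rightarrow> complex"
  assumes r: "r > 0" and lt: "\<And>k j. k < r \<Longrightarrow> j < n \<Longrightarrow> norm (x k j) < 1"
  shows "((\<lambda>\<mu>. \<Prod>k<r. Dk n (x k) \<mu>) has_sum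
           (fact n * hyperdet r n (\<lambda>idx. 1 / (1 - (\<Prod>k<r. x k (idx k))))))
         (PiE {..<n} (\<lambda>_. UNIV))"
proof -
  let ?P = "{p. p permutes {..<n}}"
  let ?S = "Pi\<^sub>E {..<r} (\<lambda>_. ?P)"
  define c where "c \<sigma> = (\<Prod>k<r. (of_int (sign (\<sigma> k)) :: complex))" for \<sigma> :: "nat \<Rightarrow> nat \<Rightarrow> nat"
  define w where "w \<sigma> i = (\<Prod>k<r. x k (\<sigma> k i))" for \<sigma> :: "nat \<Rightarrow> nat \<Rightarrow> nat" and i
  have finP: "finite ?P" by (rule finite_permutations) simp
  have finS: "finite ?S" using finP by (simp add: finite_PiE)
  have eq: "(\<Prod>k<r. Dk n (x k) \<mu>) = (\<Sum>\<sigma>\<in>?S. c \<sigma> * (\<Prod>i<n. w \<sigma> i ^ \<mu> i))" for \<mu>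
  proof -
    have "(\<Prod>k<r. Dk n (x k) \<mu>) = (\<Sum>\<sigma>\<in>?S. \<Prod>k<r. of_int (sign (\<sigma> k)) * (\<Prod>i<n. x k (\<sigma> k i) ^ \<mu> i))"
      unfolding Dk_def by (rule prod_sum_PiE) (use finP in auto)
    also have "\<dots> = (\<Sum>\<sigma>\<in>?S. c \<sigma> * (\<Prod>i<n. w \<sigma> i ^ \<mu> i))"
    proof (intro sum.cong refl)
      fix \<sigma>
      have "(\<Prod>k<r. \<Prod>i<n. x k (\<sigma> k i) ^ \<mu> i) = (\<Prod>i<n. \<Prod>k<r. x k (\<sigma> k i) ^ \<mu> i)"
        by (rule prod.swap)
      also have "\<dots> = (\<Prod>i<n. w \<sigma> i ^ \<mu> i)"
        by (simp add: w_def prod_power_distrib)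
      finally show "(\<Prod>k<r. of_int (sign (\<sigma> k)) * (\<Prod>i<n. x k (\<sigma> k i) ^ \<mu> i)) = c \<sigma> * (\<Prod>i<n. w \<sigma> i ^ \<mu> i)"
        by (simp add: c_def prod.distrib)
    qed
    finally show ?thesis .
  qed
  have hs: "((\<lambda>\<mu>. \<Sum>\<sigma>\<in>?S. c \<sigma> * (\<Prod>i<n. w \<sigma> i ^ \<mu> i)) has_sum
            (\<Sum>\<sigma>\<in>?S. c \<sigma> * (\<Prod>i<n. 1 / (1 - w \<sigma> i)))) (PiE {..<n} (\<lambda>_. UNIV))"
  proof (rule has_sum_sum_fin[OF finS], rule has_sum_cmult_right, rule geo_PiE)
    fix \<sigma> j assume \<sigma>: "\<sigma> \<in> ?S" and j: "j \<in> {..<n}"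
    have "\<sigma> k j < n" if "k < r" for k
      using \<sigma> that j permutes_in_image[of "\<sigma> k" "{..<n}" j] by (auto simp: PiE_iff)
    then show "norm (w \<sigma> j) < 1" unfolding w_def
      by (intro prod_norm_lt1 r lt) auto
  qed simp
  have val: "(\<Sum>\<sigma>\<in>?S. c \<sigma> * (\<Prod>i<n. 1 / (1 - w \<sigma> i))) = fact n * hyperdet r n (\<lambda>idx. 1 / (1 - (\<Prod>k<r. x k (idx k))))"
    unfolding hyperdet_def c_def w_def by simp
  show ?thesis using hs unfolding eq[symmetric] val .
qed

definition sdec :: "nat \<Rightarrow> (nat \<Rightarrow> nat) \<Rightarrow> bool" where
  "sdec n \<nu> \<longleftrightarrow> (\<forall>i j. i < j \<longrightarrow> j < n \<longrightarrow> \<nu> j < \<nu> i)"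

lemma sdec_aux:
  assumes "sdec n \<nu>" "sdec n \<nu>'" "\<nu>' ` {..<n} \<subseteq> \<nu> ` {..<n}" "j < n"
    "\<And>i. i < j \<Longrightarrow> \<nu> i = \<nu>' i"
  shows "\<not> \<nu> j < \<nu>' j"
proof
  assume lt: "\<nu> j < \<nu>' j"
  obtain i where i: "i < n" "\<nu>' j = \<nu> i" using assms(3,4) by blast
  have "i < j"
  proof (rule ccontr)
    assume "\<not> i < j"
    then have "i = j \<or> j < i" by auto
    then show False using lt i assms(1) unfolding sdec_def by (metis less_asym order_less_irrefl)
  qed
  then have "\<nu>' j < \<nu>' i" using assms(2,4) unfolding sdec_def by auto
  then show False using i assms(5)[OF \<open>i < j\<close>] by simp
qed

lemma sdec_unique:
  assumes "sdec n \<nu>" "sdec n \<nu>'" "\<nu>' ` {..<n} = \<nu> ` {..<n}"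
  shows "j < n \<Longrightarrow> \<nu> j = \<nu>' j"
proof (induction j rule: less_induct)
  case (less j)
  have IH: "\<And>i. i < j \<Longrightarrow> \<nu> i = \<nu>' i" using less by simp
  have "\<not> \<nu> j < \<nu>' j" by (rule sdec_aux[OF assms(1,2)]) (use assms(3) less IH in auto)
  moreover have "\<not> \<nu>' j < \<nu> j" by (rule sdec_aux[OF assms(2,1)]) (use assms(3) less IH in auto)
  ultimately show ?case by simp
qed

lemma sdec_inj: "sdec n \<nu> \<Longrightarrow> inj_on \<nu> {..<n}"
  unfolding sdec_def inj_on_def by (metis lessThan_iff linorder_neqE_nat order_less_irrefl)

lemma sort_exists:
  assumes mu: "\<mu> \<in> PiE {..<n} (\<lambda>_. UNIV)" and inj: "inj_on \<mu> {..<n}"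
  shows "\<exists>\<nu> \<tau>. \<nu> \<in> PiE {..<n} (\<lambda>_. UNIV) \<and> sdec n \<nu> \<and> \<tau> permutes {..<n} \<and> \<mu> = \<nu> \<circ> \<tau>"
proof -
  define V where "V = \<mu> ` {..<n}"
  have cV: "card V = n" unfolding V_def using card_image[OF inj] by simp
  define L where "L = rev (sorted_list_of_set V)"
  have sL: "sorted_wrt (>) L" unfolding L_def by (simp add: sorted_wrt_rev)
  have lL: "length L = n" unfolding L_def using cV by simp
  have setL: "set L = V" unfolding L_def V_def by simp
  define \<nu> where "\<nu> = restrict (\<lambda>j. L ! j) {..<n}"
  have nuPi: "\<nu> \<in> PiE {..<n} (\<lambda>_. UNIV)" unfolding \<nu>_def by simp
  have sd: "sdec n \<nu>" unfolding sdec_def \<nu>_def using sL lL by (auto simp: sorted_wrt_iff_nth_less)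
  have imnu: "\<nu> ` {..<n} = V"
  proof -
    have "\<nu> ` {..<n} = (\<lambda>j. L ! j) ` {..<length L}" unfolding \<nu>_def lL by auto
    also have "\<dots> = set L" by (auto simp: in_set_conv_nth)
    finally show ?thesis using setL by simp
  qed
  have injnu: "inj_on \<nu> {..<n}" by (rule sdec_inj[OF sd])
  have bnu: "bij_betw \<nu> {..<n} V" using injnu imnu by (simp add: bij_betw_def)
  have bmu: "bij_betw \<mu> {..<n} V" using inj V_def by (simp add: bij_betw_def)
  define \<tau> where "\<tau> j = (if j < n then the_inv_into {..<n} \<nu> (\<mu> j) else j)" for j
  have "bij_betw (the_inv_into {..<n} \<nu> \<circ> \<mu>) {..<n} {..<n}"
    by (rule bij_betw_trans[OF bmu bij_betw_the_inv_into[OF bnu]])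
  then have "bij_betw \<tau> {..<n} {..<n}"
    by (rule bij_betw_cong[THEN iffD1, rotated]) (auto simp: \<tau>_def)
  then have tau: "\<tau> permutes {..<n}"
    by (rule bij_imp_permutes) (auto simp: \<tau>_def)
  have "\<mu> = \<nu> \<circ> \<tau>"
  proof
    fix j show "\<mu> j = (\<nu> \<circ> \<tau>) j"
    proof (cases "j < n")
      case True
      then have "\<mu> j \<in> \<nu> ` {..<n}" using imnu V_def by auto
      then show ?thesis using True f_the_inv_into_f[OF injnu] by (simp add: \<tau>_def)
    next
      case False
      then show ?thesis using mu by (auto simp: \<tau>_def \<nu>_def PiE_def extensional_def)
    qed
  qed
  then show ?thesis using nuPi sd tau by blast
qed

lemma from_T_to_S:
  fixes F :: "(nat \<Rightarrow> nat) \<Rightarrow> complex"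
  assumes hs: "(F has_sum s) (PiE {..<n} (\<lambda>_. UNIV))"
    and z: "\<And>\<mu>. \<mu> \<in> PiE {..<n} (\<lambda>_. UNIV) \<Longrightarrow> \<not> inj_on \<mu> {..<n} \<Longrightarrow> F \<mu> = 0"
    and sym: "\<And>\<mu> \<tau>. \<mu> \<in> PiE {..<n} (\<lambda>_. UNIV) \<Longrightarrow> \<tau> permutes {..<n} \<Longrightarrow> F (\<mu> \<circ> \<tau>) = F \<mu>"
  shows "(F has_sum (s / fact n)) {\<nu> \<in> PiE {..<n} (\<lambda>_. UNIV). sdec n \<nu>}"
proof -
  define T where "T = PiE {..<n} (\<lambda>_. UNIV :: nat set)"
  define Sd where "Sd = {\<nu> \<in> T. sdec n \<nu>}"
  define P where "P = {p. p permutes {..<n}}"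
  define Dist where "Dist = {\<mu> \<in> T. inj_on \<mu> {..<n}}"
  define h where "h = (\<lambda>(\<tau>::nat\<Rightarrow>nat, \<nu>::nat\<Rightarrow>nat). \<nu> \<circ> \<tau>)"
  have hD: "(F has_sum s) Dist"
    using hs unfolding T_def[symmetric]
    by (subst has_sum_cong_neutral[of T Dist F F]) (use z in \<open>auto simp: Dist_def T_def\<close>)
  have inj: "inj_on h (P \<times> Sd)"
  proof (rule inj_onI)
    fix a1 b1 assume a1: "a1 \<in> P \<times> Sd" "b1 \<in> P \<times> Sd" "h a1 = h b1"
    obtain \<tau> \<nu> where ea: "a1 = (\<tau>, \<nu>)" by (cases a1)
    obtain \<tau>' \<nu>' where eb: "b1 = (\<tau>', \<nu>')" by (cases b1)
    have a: "(\<tau>, \<nu>) \<in> P \<times> Sd" "(\<tau>', \<nu>') \<in> P \<times> Sd" and e: "h (\<tau>, \<nu>) = h (\<tau>', \<nu>')"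
      using a1 ea eb by auto
    have t: "\<tau> permutes {..<n}" "\<tau>' permutes {..<n}" using a by (auto simp: P_def)
    have n: "\<nu> \<in> T" "\<nu>' \<in> T" "sdec n \<nu>" "sdec n \<nu>'" using a by (auto simp: Sd_def)
    have e': "\<nu> \<circ> \<tau> = \<nu>' \<circ> \<tau>'" using e by (simp add: h_def)
    have "\<nu> ` {..<n} = (\<nu> \<circ> \<tau>) ` {..<n}" using permutes_image[OF t(1)] by (metis image_comp)
    also have "\<dots> = \<nu>' ` {..<n}" using e' permutes_image[OF t(2)] by (metis image_comp)
    finally have im: "\<nu>' ` {..<n} = \<nu> ` {..<n}" by simp
    have nn: "\<nu> = \<nu>'"
      by (rule PiE_ext[OF n(1)[unfolded T_def] n(2)[unfolded T_def]]) (use sdec_unique[OF n(3,4) im] in auto)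
    have "\<tau> = \<tau>'"
    proof
      fix j show "\<tau> j = \<tau>' j"
      proof (cases "j < n")
        case True
        then have "\<tau> j \<in> {..<n}" "\<tau>' j \<in> {..<n}"
          using permutes_in_image[OF t(1)] permutes_in_image[OF t(2)] by auto
        moreover have "\<nu> (\<tau> j) = \<nu> (\<tau>' j)" using e' nn by (metis comp_apply)
        ultimately show ?thesis using sdec_inj[OF n(3)] by (auto dest: inj_onD)
      next
        case False
        then show ?thesis using permutes_not_in[OF t(1)] permutes_not_in[OF t(2)] by auto
      qed
    qed
    then show "a1 = b1" using nn ea eb by simp
  qed
  have img: "h ` (P \<times> Sd) = Dist"
  proof
    show "h ` (P \<times> Sd) \<subseteq> Dist"
    proof clarify
      fix \<tau> \<nu> assume a: "\<tau> \<in> P" "\<nu> \<in> Sd"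
      then have t: "\<tau> permutes {..<n}" and n: "\<nu> \<in> T" "sdec n \<nu>" by (auto simp: P_def Sd_def)
      have "\<nu> \<circ> \<tau> \<in> T"
        using n(1) permutes_in_image[OF t] permutes_not_in[OF t]
        by (auto simp: T_def PiE_def extensional_def)
      moreover have "inj_on \<nu> (\<tau> ` {..<n})" using sdec_inj[OF n(2)] permutes_image[OF t] by simp
      then have "inj_on (\<nu> \<circ> \<tau>) {..<n}"
        by (rule comp_inj_on[OF permutes_inj_on[OF t]])
      ultimately show "h (\<tau>, \<nu>) \<in> Dist" by (simp add: h_def Dist_def)
    qed
    show "Dist \<subseteq> h ` (P \<times> Sd)"
    proof
      fix \<mu> assume "\<mu> \<in> Dist"
      then obtain \<nu> \<tau> where "\<nu> \<in> T" "sdec n \<nu>" "\<tau> permutes {..<n}" "\<mu> = \<nu> \<circ> \<tau>"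
        using sort_exists unfolding Dist_def T_def by blast
      then have "(\<tau>, \<nu>) \<in> P \<times> Sd" "\<mu> = h (\<tau>, \<nu>)" unfolding h_def P_def Sd_def by auto
      then show "\<mu> \<in> h ` (P \<times> Sd)" by blast
    qed
  qed
  have "((F \<circ> h) has_sum s) (P \<times> Sd)"
    using has_sum_reindex[OF inj, of F s] hD img by simp
  moreover have "((F \<circ> h) has_sum s) (P \<times> Sd) \<longleftrightarrow> ((\<lambda>(\<tau>, \<nu>). F \<nu>) has_sum s) (P \<times> Sd)"
  proof (rule has_sum_cong)
    fix y assume "y \<in> P \<times> Sd"
    then obtain \<tau> \<nu> where y: "y = (\<tau>, \<nu>)" "\<tau> permutes {..<n}" "\<nu> \<in> T"
      unfolding P_def Sd_def by blast
    show "(F \<circ> h) y = (case y of (\<tau>, \<nu>) \<Rightarrow> F \<nu>)"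
      using sym[of \<nu> \<tau>] y by (simp add: h_def T_def)
  qed
  ultimately have hPS: "((\<lambda>(\<tau>, \<nu>). F \<nu>) has_sum s) (P \<times> Sd)" by blast
  have "F summable_on Sd"
    using hs unfolding T_def[symmetric] by (intro summable_on_subset_banach[of F T Sd]) (auto simp: summable_on_def Sd_def)
  then have hS: "(F has_sum infsum F Sd) Sd" by (rule has_sum_infsum)
  have "((\<lambda>\<tau>. infsum F Sd) has_sum s) P"
    by (rule has_sum_Sigma'[OF hPS]) (use hS in simp)
  moreover have "((\<lambda>\<tau>. infsum F Sd) has_sum (of_nat (card P) * infsum F Sd)) P"
    by (rule has_sum_finiteI) (auto simp: P_def finite_permutations)
  ultimately have "s = of_nat (card P) * infsum F Sd" using has_sum_unique by blast
  moreover have "card P = fact n" unfolding P_def by (rule card_permutations) auto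
  ultimately have "infsum F Sd = s / fact n" by (simp add: field_simps)
  then show ?thesis using hS by (simp add: Sd_def T_def)
qed

lemma sdec_gap:
  assumes "sdec n \<nu>" shows "i + d < n \<Longrightarrow> \<nu> (i + d) + d \<le> \<nu> i"
proof (induction d)
  case 0 then show ?case by simp
next
  case (Suc d)
  then have "\<nu> (i + Suc d) < \<nu> (i + d)" using assms unfolding sdec_def by auto
  with Suc show ?case by simp
qed

definition phi :: "nat \<Rightarrow> (nat \<Rightarrow> nat) \<Rightarrow> (nat \<Rightarrow> nat)" where
  "phi n lam = restrict (\<lambda>j. lam j + (n - 1 - j)) {..<n}"

lemma phi_inj: "inj_on (phi n) (partitions_le n)"
proof (rule inj_onI)
  fix a b assume a: "a \<in> partitions_le n" and b: "b \<in> partitions_le n" and e: "phi n a = phi n b"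
  show "a = b"
  proof
    fix j show "a j = b j"
    proof (cases "j < n")
      case True
      then have "phi n a j = phi n b j" using e by simp
      then show ?thesis using True by (simp add: phi_def)
    next
      case False
      then show ?thesis using a b by (simp add: partitions_le_def)
    qed
  qed
qed

lemma phi_img: "phi n ` partitions_le n = {\<nu> \<in> PiE {..<n} (\<lambda>_. UNIV). sdec n \<nu>}"
proof
  show "phi n ` partitions_le n \<subseteq> {\<nu> \<in> PiE {..<n} (\<lambda>_. UNIV). sdec n \<nu>}"
  proof clarify
    fix lam assume "lam \<in> partitions_le n"
    then have d: "\<And>i j. i \<le> j \<Longrightarrow> lam j \<le> lam i" by (simp add: partitions_le_def)
    have "sdec n (phi n lam)" unfolding sdec_def phi_def
    proof (intro allI impI)
      fix i j :: nat assume "i < j" "j < n"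
      moreover have "lam j \<le> lam i" using d \<open>i < j\<close> by simp
      ultimately show "restrict (\<lambda>j. lam j + (n - 1 - j)) {..<n} j < restrict (\<lambda>j. lam j + (n - 1 - j)) {..<n} i"
        by simp
    qed
    then show "phi n lam \<in> PiE {..<n} (\<lambda>_. UNIV) \<and> sdec n (phi n lam)" by (simp add: phi_def)
  qed
  show "{\<nu> \<in> PiE {..<n} (\<lambda>_. UNIV). sdec n \<nu>} \<subseteq> phi n ` partitions_le n"
  proof clarify
    fix \<nu> assume nu: "\<nu> \<in> PiE {..<n} (\<lambda>_. UNIV :: nat set)" "sdec n \<nu>"
    define lam where "lam j = (if j < n then \<nu> j - (n - 1 - j) else 0)" for j
    have gap: "\<nu> j + (j - i) \<le> \<nu> i" if "i \<le> j" "j < n" for i j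
      using sdec_gap[OF nu(2), of i "j - i"] that by simp
    have low: "n - 1 - j \<le> \<nu> j" if "j < n" for j
    proof -
      have "\<nu> (n - 1) + ((n - 1) - j) \<le> \<nu> j" by (rule gap) (use that in auto)
      then show ?thesis by linarith
    qed
    have "lam \<in> partitions_le n"
      unfolding partitions_le_def
    proof (intro CollectI conjI allI impI)
      fix i j :: nat assume "i \<le> j"
      show "lam j \<le> lam i"
      proof (cases "j < n")
        case True
        then have "i < n" using \<open>i \<le> j\<close> by simp
        have "\<nu> j + (j - i) \<le> \<nu> i" using gap[OF \<open>i \<le> j\<close> True] .
        then show ?thesis using True \<open>i < n\<close> low[OF True] low[OF \<open>i < n\<close>] \<open>i \<le> j\<close>
          by (simp add: lam_def)
      next
        case False then show ?thesis by (simp add: lam_def)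
      qed
    next
      fix j :: nat assume "n \<le> j" then show "lam j = 0" by (simp add: lam_def)
    qed
    moreover have "phi n lam = \<nu>"
    proof
      fix j show "phi n lam j = \<nu> j"
      proof (cases "j < n")
        case True then show ?thesis using low[OF True] by (simp add: phi_def lam_def)
      next
        case False then show ?thesis using nu(1) by (simp add: phi_def PiE_def extensional_def)
      qed
    qed
    ultimately show "\<nu> \<in> phi n ` partitions_le n" by blast
  qed
qed

lemma Dk_cong: "(\<And>i. i < n \<Longrightarrow> \<mu> i = \<mu>' i) \<Longrightarrow> Dk n y \<mu> = Dk n y \<mu>'"
  unfolding Dk_def by (intro sum.cong refl arg_cong2[where f="(*)"] prod.cong) auto

lemma sign_pow_even: "(of_int (sign p) :: complex) ^ (2 * m) = 1"
proof -
  have "(of_int (sign p) :: complex) ^ 2 = 1" by (simp add: sign_def power2_eq_square)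
  then show ?thesis by (simp add: power_mult)
qed

theorem corollary3p2:
  fixes m n :: nat and x :: "nat \<Rightarrow> nat \<Rightarrow> complex"
  assumes "m > 0" and "n > 0"
    and "\<And>k j. k < 2 * m \<Longrightarrow> j < n \<Longrightarrow> norm (x k j) < 1"
    and "\<And>k. k < 2 * m \<Longrightarrow> inj_on (x k) {..<n}"
  shows "((\<lambda>lam. \<Prod>k<2 * m. schur n (x k) lam) has_sum
           ((\<Prod>k<2 * m. 1 / vandermonde n (x k)) *
            hyperdet (2 * m) n (\<lambda>idx. 1 / (1 - (\<Prod>k<2 * m. x k (idx k))))))
         (partitions_le n)"
proof -
  define r where "r = 2 * m"
  define G where "G \<mu> = (\<Prod>k<r. Dk n (x k) \<mu>)" for \<mu>
  define hd where "hd = hyperdet r n (\<lambda>idx. 1 / (1 - (\<Prod>k<r. x k (idx k))))"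
  define C where "C = (\<Prod>k<r. 1 / vandermonde n (x k))"
  have r0: "r > 0" using assms(1) by (simp add: r_def)
  have hT: "(G has_sum (fact n * hd)) (PiE {..<n} (\<lambda>_. UNIV))"
    unfolding G_def hd_def by (rule T_sum[OF r0]) (use assms(3) in \<open>auto simp: r_def\<close>)
  have hS: "(G has_sum (fact n * hd / fact n)) {\<nu> \<in> PiE {..<n} (\<lambda>_. UNIV). sdec n \<nu>}"
  proof (rule from_T_to_S[OF hT])
    fix \<mu> :: "nat \<Rightarrow> nat" assume "\<not> inj_on \<mu> {..<n}"
    then obtain a b where ab: "a < n" "b < n" "a \<noteq> b" "\<mu> a = \<mu> b"
      unfolding inj_on_def by auto
    have "Dk n (x 0) \<mu> = 0" by (rule D_zero[OF ab])
    then show "G \<mu> = 0" unfolding G_def using r0 by (intro prod_zero) auto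
  next
    fix \<mu> :: "nat \<Rightarrow> nat" and \<tau> assume t: "\<tau> permutes {..<n}"
    have "G (\<mu> \<circ> \<tau>) = (\<Prod>k<r. of_int (sign \<tau>) * Dk n (x k) \<mu>)"
      unfolding G_def using D_perm[OF t] by simp
    also have "\<dots> = (of_int (sign \<tau>)) ^ r * G \<mu>"
      by (simp add: G_def prod.distrib)
    also have "\<dots> = G \<mu>" by (simp add: r_def sign_pow_even)
    finally show "G (\<mu> \<circ> \<tau>) = G \<mu>" .
  qed
  then have hS': "(G has_sum hd) (phi n ` partitions_le n)"
    using phi_img[of n] by simp
  have "((G \<circ> phi n) has_sum hd) (partitions_le n)"
    using has_sum_reindex[OF phi_inj, where g=G and x=hd] hS' by simp
  then have "((\<lambda>lam. C * (G \<circ> phi n) lam) has_sum (C * hd)) (partitions_le n)"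
    by (rule has_sum_cmult_right)
  moreover have "(\<lambda>lam. \<Prod>k<r. schur n (x k) lam) = (\<lambda>lam. C * (G \<circ> phi n) lam)"
  proof
    fix lam
    have "schur n (x k) lam = 1 / vandermonde n (x k) * Dk n (x k) (phi n lam)" for k
    proof -
      have "Dk n (x k) (\<lambda>j. lam j + (n - 1 - j)) = Dk n (x k) (phi n lam)"
        by (rule Dk_cong) (simp add: phi_def)
      then show ?thesis unfolding schur_def det_link by simp
    qed
    then have "(\<Prod>k<r. schur n (x k) lam) = (\<Prod>k<r. 1 / vandermonde n (x k) * Dk n (x k) (phi n lam))"
      by (intro prod.cong refl)
    also have "\<dots> = C * (G \<circ> phi n) lam"
      unfolding C_def G_def comp_def by (rule prod.distrib)
    finally show "(\<Prod>k<r. schur n (x k) lam) = C * (G \<circ> phi n) lam" .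
  qed
  ultimately have "((\<lambda>lam. \<Prod>k<r. schur n (x k) lam) has_sum (C * hd)) (partitions_le n)"
    by simp
  then show ?thesis unfolding r_def C_def hd_def .
qed

end
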